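(* Let $\kappa\ge2$ be an integer, $\Delta>0$ and $a\in\mathbb R$. Then \[\sum_{m=-\infty}^{\infty}\frac1{((m+a)^2+\Delta^2)^{\kappa/2}}\le\frac{\kappa+\Delta}{\Delta}\int_{\mathbb R}\frac{dx}{(x^2+\Delta^2)^{\kappa/2}}.\] *)

theory Defs
  imports "HOL-Analysis.Analysis"
begin

end

theory Submission
  imports Defs "HOL-Probability.Sinc_Integral"
begin
lemma int1: "integrable lborel (\<lambda>x::real. inverse (1 + x^2))"
proof -
  have "einterval (-\<infinity>) \<infinity> = (UNIV::real set)" by (auto simp: einterval_iff)
  then show ?thesis using integrable_inverse_1_plus_square unfolding set_integrable_def by simp
qed

lemma fbound:
  fixes p D x :: real
  assumes "p \<ge> 1" "D > 0"
  shows "1 / ((x^2 + D) powr p) \<le> (1 / (min 1 D * D powr (p - 1))) * inverse (1 + x^2)"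
proof -
  have "(x^2 + D) powr p = (x^2 + D) * (x^2 + D) powr (p - 1)"
    using assms by (simp add: powr_diff powr_one' add_pos_nonneg)  
  also have "\<dots> \<ge> (min 1 D * (1 + x^2)) * D powr (p - 1)"
  proof (rule mult_mono)
    show "min 1 D * (1 + x\<^sup>2) \<le> x\<^sup>2 + D"
    proof (cases "D \<le> 1")
      case True
      have "D * x^2 \<le> 1 * x^2" using True by (intro mult_right_mono) auto
      then show ?thesis using True by (simp add: min_def algebra_simps)
    qed (simp add: min_def)
    show "D powr (p - 1) \<le> (x\<^sup>2 + D) powr (p - 1)" using assms by (intro powr_mono2) auto
  qed (use assms in auto)
  finally have *: "(min 1 D * (1 + x^2)) * D powr (p - 1) \<le> (x^2 + D) powr p" .
  have pos: "(min 1 D * (1 + x^2)) * D powr (p - 1) > 0" using assms by (auto intro!: mult_pos_pos add_pos_nonneg)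
  have "1 / ((x^2 + D) powr p) \<le> 1 / ((min 1 D * (1 + x^2)) * D powr (p - 1))"
    using * pos by (intro divide_left_mono) (auto intro!: mult_pos_pos)
  then show ?thesis by (simp add: field_simps)
qed

lemma fint:
  fixes p D :: real
  assumes "p \<ge> 1" "D > 0"
  shows "(\<lambda>x::real. 1 / ((x^2 + D) powr p)) integrable_on UNIV"
proof (rule integrable_on_lborel)
  show "integrable lborel (\<lambda>x::real. 1 / ((x^2 + D) powr p))"
  proof (rule Bochner_Integration.integrable_bound)
    show "integrable lborel (\<lambda>x::real. (1 / (min 1 D * D powr (p - 1))) * inverse (1 + x^2))"
      using int1 by simp
    show "(\<lambda>x::real. 1 / ((x^2 + D) powr p)) \<in> borel_measurable lborel" by measurable
    show "AE x in lborel. norm (1 / ((x^2 + D) powr p)) \<le> norm ((1 / (min 1 D * D powr (p - 1))) * inverse (1 + x^2))"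
      using fbound[OF assms] assms by (auto simp: abs_of_nonneg add_pos_nonneg)
  qed
qed

definition ff :: "real \<Rightarrow> real \<Rightarrow> real \<Rightarrow> real" where
  "ff p D x = 1 / ((x^2 + D) powr p)"

context
  fixes p D :: real
  assumes p1: "p \<ge> 1" and D0: "D > 0"
begin

lemma ff_base: "x^2 + D > 0"
  using D0 zero_le_power2[of x] by linarith

lemma ff_pos: "ff p D x > 0"
  using ff_base[of x] by (simp add: ff_def)

lemma ff_mono: "x^2 \<le> y^2 \<Longrightarrow> ff p D y \<le> ff p D x"
  unfolding ff_def using D0 p1
  using ff_base[of x] ff_base[of y]
  by (intro divide_left_mono powr_mono2 mult_pos_pos) auto

lemma ff_int: "ff p D integrable_on UNIV"
  using fint[OF p1 D0] by (simp add: ff_def[abs_def])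

lemma ff_int_iv: "ff p D integrable_on {u..v}"
  using integrable_on_subinterval[OF ff_int] by auto

lemma ff_iv_ge: 
  assumes "u \<le> v" "\<And>x. x \<in> {u..v} \<Longrightarrow> c \<le> ff p D x"
  shows "(v - u) * c \<le> integral {u..v} (ff p D)"
proof -
  have "integral {u..v} (\<lambda>x. c) \<le> integral {u..v} (ff p D)"
    by (rule integral_le) (use assms ff_int_iv in auto)
  then show ?thesis using assms by simp
qed

lemma ff_right: "t \<ge> 1 \<Longrightarrow> ff p D t \<le> integral {t-1..t} (ff p D)"
proof -
  assume t: "t \<ge> 1"
  have "x^2 \<le> t^2" if "x \<in> {t-1..t}" for x
    using that t by (intro power_mono) auto
  then have "(t - (t-1)) * ff p D t \<le> integral {t-1..t} (ff p D)"
    using t by (intro ff_iv_ge ff_mono) auto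
  then show ?thesis by simp
qed

lemma ff_left: "t \<le> -1 \<Longrightarrow> ff p D t \<le> integral {t..t+1} (ff p D)"
proof -
  assume t: "t \<le> -1"
  have "x^2 \<le> t^2" if "x \<in> {t..t+1}" for x
  proof -
    have "(-x)^2 \<le> (-t)^2" using that t by (intro power_mono) auto
    then show ?thesis by simp
  qed
  then show ?thesis using ff_iv_ge[of t "t+1" "ff p D t"] t by (auto intro!: ff_mono)
qed

lemma ff_iv_nonneg: "0 \<le> integral {u..v} (ff p D)"
  by (rule Henstock_Kurzweil_Integration.integral_nonneg) (use ff_int_iv ff_pos[THEN less_imp_le] in auto)

lemma ff_iv_le: "integral {u..v} (ff p D) \<le> integral UNIV (ff p D)"
  by (rule integral_subset_le) (use ff_int_iv ff_int ff_pos[THEN less_imp_le] in auto)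

lemma ff_additive_n:
  fixes lo :: int and a :: real and n :: nat
  shows "integral {real_of_int lo + a - 1 .. real_of_int (lo + int n) + a} (ff p D)
       = (\<Sum>m\<in>{lo..lo + int n}. integral {real_of_int m + a - 1 .. real_of_int m + a} (ff p D))"
proof (induction n)
  case 0
  then show ?case by simp
next
  case (Suc n)
  have eq: "{lo..lo + int (Suc n)} = insert (lo + int n + 1) {lo..lo + int n}" by auto
  have fin: "lo + int n + 1 \<notin> {lo..lo + int n}" by simp
  have "(\<Sum>m\<in>{lo..lo + int (Suc n)}. integral {real_of_int m + a - 1 .. real_of_int m + a} (ff p D))
      = integral {real_of_int (lo + int n + 1) + a - 1 .. real_of_int (lo + int n + 1) + a} (ff p D) + (\<Sum>m\<in>{lo..lo + int n}. integral {real_of_int m + a - 1 .. real_of_int m + a} (ff p D))"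
    unfolding eq using fin by (subst sum.insert) auto
  also have "\<dots> = integral {real_of_int (lo + int n) + a .. real_of_int (lo + int n) + 1 + a} (ff p D) + integral {real_of_int lo + a - 1 .. real_of_int (lo + int n) + a} (ff p D)"
    using Suc by (simp add: algebra_simps)
  also have "\<dots> = integral {real_of_int lo + a - 1 .. real_of_int (lo + int n) + 1 + a} (ff p D)"
    using Henstock_Kurzweil_Integration.integral_combine[where f="ff p D" and a="real_of_int lo + a - 1" and c="real_of_int (lo + int n) + a" and b="real_of_int (lo + int n) + 1 + a"] ff_int_iv
    by simp
  finally show ?case by (simp add: algebra_simps)
qed

lemma ff_additive:
  fixes lo hi :: int and a :: real
  assumes "lo \<le> hi"
  shows "integral {real_of_int lo + a - 1 .. real_of_int hi + a} (ff p D)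
       = (\<Sum>m\<in>{lo..hi}. integral {real_of_int m + a - 1 .. real_of_int m + a} (ff p D))"
proof -
  obtain n where "hi = lo + int n" using assms by (metis zle_iff_zadd)
  then show ?thesis using ff_additive_n by simp
qed

lemma ff_finite:
  fixes F :: "int set" and a :: real
  assumes finF: "finite F"
  shows "(\<Sum>m\<in>F. ff p D (real_of_int m + a)) \<le> integral UNIV (ff p D) + 2 * ff p D 0"
proof -
  define h where "h m = integral {real_of_int m + a - 1 .. real_of_int m + a} (ff p D)" for m
  define k where "k = \<lfloor>-a\<rfloor>"
  define g where "g m = ff p D (real_of_int m + a)" for m
  define N where "N = Max (insert 0 (abs ` F))"
  have N0: "N \<ge> 0" unfolding N_def using finF by simp
  have FN: "F \<subseteq> {-N..N}"
  proof
    fix m assume "m \<in> F"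
    then have "\<bar>m\<bar> \<le> N" unfolding N_def using finF by (intro Max_ge) auto
    then show "m \<in> {-N..N}" by auto
  qed
  define P where "P = {m\<in>F. real_of_int m + a \<ge> 1}"
  define Q where "Q = {m\<in>F. real_of_int m + a \<le> -1}"
  define R where "R = {m\<in>F. \<not> real_of_int m + a \<ge> 1 \<and> \<not> real_of_int m + a \<le> -1}"
  have finP: "finite P" "finite Q" "finite R" using finF by (auto simp: P_def Q_def R_def)
  have Fsplit: "F = P \<union> Q \<union> R" by (auto simp: P_def Q_def R_def)
  have sumF: "sum g F = sum g P + sum g Q + sum g R"
    unfolding Fsplit using finP
    by (subst sum.union_disjoint; (auto simp: P_def Q_def R_def)[])+ 
  have hnn: "0 \<le> h m" for m unfolding h_def by (rule ff_iv_nonneg)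
  have f0: "0 \<le> ff p D 0" using ff_pos[of 0] by simp
  have sP: "sum g P \<le> sum h P"
    by (rule sum_mono) (auto simp: P_def g_def h_def intro!: ff_right)
  have hsuc: "h (m+1) = integral {real_of_int m + a .. real_of_int m + a + 1} (ff p D)" for m
    by (simp add: h_def algebra_simps)
  have sQ: "sum g Q \<le> sum (\<lambda>m. h (m+1)) Q"
    by (rule sum_mono) (auto simp: Q_def g_def hsuc intro!: ff_left)
  also have "\<dots> = sum h ((\<lambda>m. m+1) ` Q)"
    by (subst sum.reindex) (auto simp: inj_on_def)
  finally have sQ: "sum g Q \<le> sum h ((\<lambda>m. m+1) ` Q)" .
  have Rk: "R \<subseteq> {k, k+1}"
  proof
    fix m assume m: "m \<in> R"
    have a1: "real_of_int k \<le> -a" "-a < real_of_int k + 1" unfolding k_def by simp_all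
    have "real_of_int (k - 1) < real_of_int m" using m a1 by (auto simp: R_def)
    then have "k - 1 < m" by (simp only: of_int_less_iff)
    moreover have "real_of_int m < real_of_int (k + 2)" using m a1 by (auto simp: R_def)
    then have "m < k + 2" by (simp only: of_int_less_iff)
    ultimately show "m \<in> {k, k+1}" by auto
  qed
  have "sum g R \<le> sum (\<lambda>_. ff p D 0) R"
    by (rule sum_mono) (auto simp: g_def intro!: ff_mono)
  also have "\<dots> = real (card R) * ff p D 0" by simp
  also have "\<dots> \<le> 2 * ff p D 0"
  proof -
    have "card R \<le> card {k, k+1}" using Rk by (intro card_mono) auto
    also have "\<dots> \<le> 2" by (simp add: card_insert_le_m1)
    finally have "real (card R) \<le> 2" by simp
    then show ?thesis using f0 by (intro mult_right_mono) auto
  qed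
  finally have sR: "sum g R \<le> 2 * ff p D 0" .
  have disj: "P \<inter> (\<lambda>m. m+1) ` Q = {}" by (auto simp: P_def Q_def)
  have "sum h P + sum h ((\<lambda>m. m+1) ` Q) = sum h (P \<union> (\<lambda>m. m+1) ` Q)"
    using finP disj by (intro sum.union_disjoint[symmetric]) auto
  also have "\<dots> \<le> sum h {-N..N+1}"
    using FN finP by (intro sum_mono2) (auto simp: P_def Q_def hnn)
  also have "\<dots> = integral {real_of_int (-N) + a - 1 .. real_of_int (N+1) + a} (ff p D)"
    unfolding h_def using N0 by (intro ff_additive[symmetric]) auto
  also have "\<dots> \<le> integral UNIV (ff p D)" by (rule ff_iv_le)
  finally have "sum h P + sum h ((\<lambda>m. m+1) ` Q) \<le> integral UNIV (ff p D)" .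
  then show ?thesis using sumF sP sQ sR unfolding g_def by linarith
qed

lemma ff_infsum:
  fixes a :: real
  shows "(\<Sum>\<^sub>\<infinity>m\<in>(UNIV::int set). ff p D (real_of_int m + a)) \<le> integral UNIV (ff p D) + 2 * ff p D 0"
proof -
  have summ: "(\<lambda>m::int. ff p D (real_of_int m + a)) summable_on UNIV"
  proof (rule nonneg_bdd_above_summable_on)
    show "0 \<le> ff p D (real_of_int x + a)" for x :: int using ff_pos by (simp add: less_imp_le)
    show "bdd_above (sum (\<lambda>m::int. ff p D (real_of_int m + a)) ` {F. F \<subseteq> UNIV \<and> finite F})"
      by (rule bdd_aboveI[where M="integral UNIV (ff p D) + 2 * ff p D 0"]) (auto intro: ff_finite)
  qed
  show ?thesis by (rule infsum_le_finite_sums[OF summ]) (rule ff_finite)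
qed

lemma ff_lower:
  assumes c: "c > 0"
  shows "2 * c * ff p D c \<le> integral UNIV (ff p D)"
proof -
  have "x^2 \<le> c^2" if "x \<in> {-c..c}" for x
  proof -
    have "\<bar>x\<bar>^2 \<le> \<bar>c\<bar>^2" using that c by (intro power_mono) auto
    then show ?thesis by simp
  qed
  then have "(c - (-c)) * ff p D c \<le> integral {-c..c} (ff p D)"
    using c by (intro ff_iv_ge ff_mono) auto
  also have "\<dots> \<le> integral UNIV (ff p D)" by (rule ff_iv_le)
  finally show ?thesis by simp
qed

end

lemma alg1: fixes s k d X :: real assumes "s > 0" "s * s = k" "d > 0" "X > 0"
  shows "k / d * (2 * (d / s) * (1 / X)) = 2 * s / X"
proof -
  have "k / d * (2 * (d / s) * (1 / X)) = 2 * (k / s) / X" using assms by (simp add: field_simps)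
  also have "k / s = s" using assms by (simp add: field_simps)
  finally show ?thesis by simp
qed
lemma alg2: fixes s A B :: real assumes "B \<le> s" "B > 0" "A > 0"
  shows "2 / A \<le> 2 * s / (A * B)"
proof -
  have "2 / A = 2 * B / (A * B)" using assms by simp
  also have "\<dots> \<le> 2 * s / (A * B)" using assms by (intro divide_right_mono) auto
  finally show ?thesis .
qed

lemma aux_exp: "(1 + 1 / real k) powr real k \<le> exp 1"
proof (cases "k = 0")
  case False
  then have pos: "0 < 1 + 1 / real k" by (simp add: add_pos_nonneg)
  have "(1 + 1 / real k) powr real k = exp (real k * ln (1 + 1 / real k))"
    using pos by (simp add: powr_def)
  also have "\<dots> \<le> exp 1"
  proof -
    have "ln (1 + 1 / real k) \<le> 1 / real k" by (rule ln_add_one_self_le_self) simp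
    then have "real k * ln (1 + 1 / real k) \<le> real k * (1 / real k)" by (intro mult_left_mono) auto
    then show ?thesis using False by simp
  qed
  finally show ?thesis .
qed simp

theorem lemmaB2:
  fixes \<kappa> :: nat and \<Delta> a :: real
  assumes "\<kappa> \<ge> 2" and "\<Delta> > 0"
  shows "(\<Sum>\<^sub>\<infinity>m\<in>(UNIV::int set). 1 / (((real_of_int m + a)^2 + \<Delta>^2) powr (real \<kappa> / 2)))
           \<le> (real \<kappa> + \<Delta>) / \<Delta> * integral UNIV (\<lambda>x::real. 1 / ((x^2 + \<Delta>^2) powr (real \<kappa> / 2)))"
proof -
  define p where "p = real \<kappa> / 2"
  define D where "D = \<Delta>^2"
  have p1: "p \<ge> 1" using assms by (simp add: p_def)
  have D0: "D > 0" using assms by (simp add: D_def)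
  define I where "I = integral UNIV (ff p D)"
  have L: "(\<Sum>\<^sub>\<infinity>m\<in>(UNIV::int set). 1 / (((real_of_int m + a)^2 + \<Delta>^2) powr (real \<kappa> / 2)))
        = (\<Sum>\<^sub>\<infinity>m\<in>(UNIV::int set). ff p D (real_of_int m + a))"
    by (simp add: ff_def p_def D_def)
  have Rt: "integral UNIV (\<lambda>x::real. 1 / ((x^2 + \<Delta>^2) powr (real \<kappa> / 2))) = I"
    by (simp add: I_def ff_def[abs_def] p_def D_def)
  have A: "D powr p = \<Delta> ^ \<kappa>"
  proof -
    have "D powr p = (\<Delta> powr 2) powr (real \<kappa> / 2)" using assms by (simp add: D_def p_def powr_realpow)
    also have "\<dots> = \<Delta> powr real \<kappa>" by (simp add: powr_powr)
    also have "\<dots> = \<Delta> ^ \<kappa>" using assms by (simp add: powr_realpow)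
    finally show ?thesis .
  qed
  have f0: "ff p D 0 = 1 / \<Delta> ^ \<kappa>" by (simp add: ff_def A)
  have key: "2 * ff p D 0 \<le> real \<kappa> / \<Delta> * I"
  proof (cases "\<kappa> = 2")
    case True
    have "2 * \<Delta> * ff p D \<Delta> \<le> I" unfolding I_def using ff_lower[OF p1 D0 assms(2)] .
    moreover have "ff p D \<Delta> = 1 / (2 * \<Delta>^2)" using True assms by (simp add: ff_def p_def D_def)
    ultimately have "1 / \<Delta> \<le> I" using assms by (simp add: power2_eq_square)
    then have "2 / \<Delta> * (1 / \<Delta>) \<le> 2 / \<Delta> * I" using assms by (intro mult_left_mono) auto
    then show ?thesis using True f0 by (simp add: power2_eq_square)
  next
    case False
    then have k3: "\<kappa> \<ge> 3" using assms by simp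
    define c where "c = \<Delta> / sqrt (real \<kappa>)"
    have c0: "c > 0" using assms k3 by (simp add: c_def)
    define B where "B = (1 + 1 / real \<kappa>) powr p"
    have pos1: "1 + 1 / real \<kappa> > 0" by (simp add: add_pos_nonneg)
    have B0: "B > 0" using pos1 by (simp add: B_def)
    have "c^2 + D = D * (1 + 1 / real \<kappa>)" using k3 by (simp add: c_def D_def power_divide field_simps)
    then have "(c^2 + D) powr p = D powr p * B" using D0 by (simp add: B_def powr_mult add_pos_nonneg)
    then have fc: "ff p D c = 1 / (\<Delta> ^ \<kappa> * B)" by (simp add: ff_def A)
    have "B^2 = B powr 2" using B0 by (simp add: powr_numeral)
    also have "\<dots> = (1 + 1 / real \<kappa>) powr (p * 2)" by (simp add: B_def powr_powr)
    also have "\<dots> = (1 + 1 / real \<kappa>) powr real \<kappa>" by (simp add: p_def)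
    also have "\<dots> \<le> exp 1" by (rule aux_exp)
    also have "\<dots> \<le> 3" by (rule exp_le)
    also have "\<dots> \<le> (sqrt (real \<kappa>))^2" using k3 by simp
    finally have Bk: "B \<le> sqrt (real \<kappa>)" by (rule power2_le_imp_le) auto
    have lo: "2 * c * ff p D c \<le> I" unfolding I_def using ff_lower[OF p1 D0 c0] .
    have Dk: "\<Delta> ^ \<kappa> > 0" using assms by simp
    have sk: "sqrt (real \<kappa>) > 0" using k3 by simp
    have sq: "sqrt (real \<kappa>) * sqrt (real \<kappa>) = real \<kappa>" by simp
    have "real \<kappa> / \<Delta> * (2 * c * ff p D c) = 2 * sqrt (real \<kappa>) / (\<Delta> ^ \<kappa> * B)"
      unfolding fc unfolding c_def by (rule alg1) (use assms sk B0 Dk sq in auto)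
    moreover have "real \<kappa> / \<Delta> * (2 * c * ff p D c) \<le> real \<kappa> / \<Delta> * I"
      using lo assms by (intro mult_left_mono) auto
    moreover have "2 / \<Delta> ^ \<kappa> \<le> 2 * sqrt (real \<kappa>) / (\<Delta> ^ \<kappa> * B)"
      using Bk B0 Dk by (rule alg2)
    ultimately show ?thesis using f0 by simp
  qed
  have "(\<Sum>\<^sub>\<infinity>m\<in>(UNIV::int set). ff p D (real_of_int m + a)) \<le> I + 2 * ff p D 0"
    unfolding I_def by (rule ff_infsum[OF p1 D0])
  also have "\<dots> \<le> I + real \<kappa> / \<Delta> * I" using key by simp
  also have "\<dots> = (real \<kappa> + \<Delta>) / \<Delta> * I" using assms by (simp add: field_simps)
  finally show ?thesis using L Rt by simp
qed

end
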